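(* Let $k\ge 3$ be an integer such that every set of $k-1$ distinct positive integers has the LR property. Let $p$ be a positive integer with the following property: for all $v_1,\ldots,v_k\in\{0,1,\ldots,(k+1)p-1\}$ such that (i) for every subset $S\subseteq\{v_1,\ldots,v_k\}$ of size $k-1$ we have $\gcd(S\cup\{(k+1)p\})=1$, and (ii) no $v_i$ is divisible by $p$, there exists $t\in\{0,1,\ldots,(k+1)p-1\}$ such that $\left\|\frac{t v_i}{(k+1)p}\right\|\ge\frac{1}{k+1}$ for all $i$. Then for every set $\{v_1,\ldots,v_k\}$ of $k$ distinct integers that does not have the LR property, $p$ divides $\prod_{i=1}^k v_i$.
   Context: For a real number $x$, $\|x\|$ denotes the distance from $x$ to the nearest integer. A finite set $S$ of $m$ integers has the LR (lonely runner) property if there exists a real $t$ such that $\|tv\|\ge \frac{1}{m+1}$ for all $v\in S$. The hypothesis "every set of $k-1$ distinct positive integers has the LR property" is what the paper calls "the lonely runner conjecture holds for $k-1$". *)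

theory Defs
  imports Complex_Main
begin

definition dist_int :: "real \<Rightarrow> real" where
  "dist_int x = \<bar>x - of_int (round x)\<bar>"

definition LR_property :: "int set \<Rightarrow> bool" where
  "LR_property S \<longleftrightarrow>
     (\<exists>t::real. \<forall>v\<in>S. dist_int (t * of_int v) \<ge> 1 / (real (card S) + 1))"

end

theory Submission
  imports Defs
begin


lemma dist_ge_iff: "c \<le> dist_int x \<longleftrightarrow> (\<forall>m::int. c \<le> \<bar>x - of_int m\<bar>)"
proof
  assume "c \<le> dist_int x" thus "\<forall>m::int. c \<le> \<bar>x - of_int m\<bar>"
  proof (intro allI)
    fix m :: int
    assume c: "c \<le> dist_int x"
    have r: "\<bar>of_int (round x) - x\<bar> \<le> 1/2" by (rule of_int_round_abs_le)
    show "c \<le> \<bar>x - of_int m\<bar>"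
    proof (rule ccontr)
      assume "\<not> c \<le> \<bar>x - of_int m\<bar>"
      hence lt: "\<bar>x - of_int m\<bar> < \<bar>x - of_int (round x)\<bar>" using c unfolding dist_int_def by simp
      hence "\<bar>of_int m - of_int (round x)\<bar> < (1::real)" using r by linarith
      hence "\<bar>m - round x\<bar> < 1" by linarith
      hence "m = round x" by linarith
      thus False using lt by simp
    qed
  qed
next
  assume "\<forall>m::int. c \<le> \<bar>x - of_int m\<bar>" thus "c \<le> dist_int x" unfolding dist_int_def by simp
qed

lemma dist_add_int: "c \<le> dist_int x \<Longrightarrow> c \<le> dist_int (x + of_int n)"
proof -
  assume "c \<le> dist_int x"
  hence h: "\<forall>m::int. c \<le> \<bar>x - of_int m\<bar>" by (simp add: dist_ge_iff)
  have "\<forall>m::int. c \<le> \<bar>x + of_int n - of_int m\<bar>"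
  proof
    fix m :: int show "c \<le> \<bar>x + of_int n - of_int m\<bar>" using h[rule_format, of "m - n"] by (simp add: algebra_simps)
  qed
  thus ?thesis by (simp add: dist_ge_iff)
qed

lemma dist_neg: "c \<le> dist_int x \<Longrightarrow> c \<le> dist_int (- x)"
proof -
  assume "c \<le> dist_int x"
  hence h: "\<forall>m::int. c \<le> \<bar>x - of_int m\<bar>" by (simp add: dist_ge_iff)
  have "\<forall>m::int. c \<le> \<bar>- x - of_int m\<bar>"
  proof
    fix m :: int show "c \<le> \<bar>- x - of_int m\<bar>" using h[rule_format, of "- m"] by (simp add: algebra_simps abs_minus_commute)
  qed
  thus ?thesis by (simp add: dist_ge_iff)
qed

lemma dist_quarter:
  assumes "1/4 \<le> x - of_int m" "x - of_int m \<le> 3/4"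
  shows "1/4 \<le> dist_int x"
  unfolding dist_ge_iff
proof
  fix m' :: int
  show "1/4 \<le> \<bar>x - of_int m'\<bar>"
  proof (cases "m' \<le> m")
    case True
    hence "real_of_int m' \<le> of_int m" by simp
    thus ?thesis using assms by linarith
  next
    case False
    hence "real_of_int m' \<ge> of_int m + 1" by linarith
    thus ?thesis using assms by linarith
  qed
qed

lemma fill_quarter:
  fixes x :: real and q :: int
  assumes "q \<ge> 2"
  shows "\<exists>b::int. \<exists>m::int. 1/4 \<le> x + of_int b / of_int q - of_int m \<and> x + of_int b / of_int q - of_int m \<le> 3/4"
proof -
  define y where "y = x - of_int (floor x)"
  define b where "b = ceiling ((1/4 - y) * of_int q)"
  have qp: "real_of_int q \<ge> 2" using assms by simp
  have b1: "of_int b \<ge> (1/4 - y) * of_int q" unfolding b_def by linarith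
  have b2: "of_int b < (1/4 - y) * of_int q + 1" unfolding b_def by linarith
  have "of_int b / of_int q \<ge> 1/4 - y" using b1 qp by (simp add: field_simps)
  moreover have "of_int b / of_int q < 1/4 - y + 1 / of_int q" using b2 qp by (simp add: field_simps)
  moreover have "1 / real_of_int q \<le> 1/2" using qp by simp
  ultimately show ?thesis unfolding y_def
    by (intro exI[of _ b] exI[of _ "floor x"]) linarith
qed


lemma keyA:
  fixes k :: nat and V :: "int set" and q j :: int
  assumes k3: "k \<ge> 3"
    and LRC: "\<And>S. finite S \<Longrightarrow> card S = k - 1 \<Longrightarrow> S \<subseteq> {x. x > 0} \<Longrightarrow> LR_property S"
    and fin: "finite V" and cV: "card V = k" and pos: "V \<subseteq> {x. x > 0}"
    and jV: "j \<in> V" and q2: "q \<ge> 2" and qd: "\<forall>v\<in>V-{j}. q dvd v" and cop: "coprime q j"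
  shows "LR_property V"
proof -
  define S where "S = (\<lambda>v. v div q) ` (V - {j})"
  have inj: "inj_on (\<lambda>v. v div q) (V - {j})"
  proof (rule inj_onI)
    fix a b assume a: "a \<in> V - {j}" and b: "b \<in> V - {j}" and e: "a div q = b div q"
    have "a = q * (a div q)" using qd a by simp
    also have "\<dots> = q * (b div q)" using e by simp
    also have "\<dots> = b" using qd b by simp
    finally show "a = b" .
  qed
  have cS: "card S = k - 1" unfolding S_def using card_image[OF inj] fin jV cV by simp
  have Spos: "S \<subseteq> {x. x > 0}"
  proof
    fix s assume "s \<in> S"
    then obtain v where v: "v \<in> V - {j}" "s = v div q" unfolding S_def by auto
    have "v = q * s" using qd v by simp
    moreover have "v > 0" using v pos by auto
    ultimately show "s \<in> {x. x > 0}" using q2 by (simp add: zero_less_mult_iff)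
  qed
  from LRC[OF _ cS Spos] obtain t where t: "\<forall>s\<in>S. 1 / (real (card S) + 1) \<le> dist_int (t * of_int s)"
    unfolding S_def LR_property_def using fin by auto
  have kk: "real (card S) + 1 = real k" using cS k3 by simp
  obtain b m where bm: "1/4 \<le> t * of_int j / of_int q + of_int b / of_int q - of_int m"
      "t * of_int j / of_int q + of_int b / of_int q - of_int m \<le> 3/4"
    using fill_quarter[OF q2] by blast
  have "gcd j q = 1" using cop by (metis coprime_commute coprime_iff_gcd_eq_1)
  then obtain u w where uw: "u * j + w * q = 1" using bezout_int[of j q] by auto
  define a where "a = u * b"
  have aj: "a * j = b - q * (w * b)" unfolding a_def using uw by (metis (no_types, opaque_lifting) add_diff_cancel mult.assoc mult.commute mult_1_right ring_class.ring_distribs(2))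
  define t' where "t' = (t + of_int a) / of_int q"
  have "\<forall>v\<in>V. 1 / (real (card V) + 1) \<le> dist_int (t' * of_int v)"
  proof
    fix v assume vV: "v \<in> V"
    show "1 / (real (card V) + 1) \<le> dist_int (t' * of_int v)"
    proof (cases "v = j")
      case True
      have "t' * of_int v = (t * of_int j / of_int q + of_int b / of_int q - of_int m) + of_int (m - w * b)"
      proof -
        have "real_of_int (a * j) = of_int b - of_int q * of_int (w * b)" using aj by simp
        hence "of_int a * of_int j = real_of_int b - of_int q * of_int (w * b)" by simp
        thus ?thesis unfolding t'_def True using q2 by (simp add: field_simps)
      qed
      moreover have "1/4 \<le> dist_int (t * of_int j / of_int q + of_int b / of_int q - of_int m)"
        using bm dist_quarter[where m=0] by simp
      ultimately have "1/4 \<le> dist_int (t' * of_int v)" using dist_add_int by metis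
      moreover have "1 / (real (card V) + 1) \<le> 1/4" using cV k3 by (simp add: field_simps)
      ultimately show ?thesis by linarith
    next
      case False
      hence vS: "v div q \<in> S" unfolding S_def using vV by auto
      have vq: "v = q * (v div q)" using qd vV False by simp
      have "t' * of_int v = t * of_int (v div q) + of_int (a * (v div q))"
      proof -
        have "real_of_int v = of_int q * of_int (v div q)" by (subst vq) simp
        thus ?thesis unfolding t'_def using q2 by (simp add: field_simps)
      qed
      moreover have "1 / real k \<le> dist_int (t * of_int (v div q))" using t vS kk by auto
      ultimately have "1 / real k \<le> dist_int (t' * of_int v)" using dist_add_int by metis
      moreover have "1 / (real (card V) + 1) \<le> 1 / real k" using cV k3 by (simp add: field_simps)
      ultimately show ?thesis by linarith
    qed
  qed
  thus ?thesis unfolding LR_property_def by blast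
qed


lemma main_pos:
  fixes k :: nat and p :: int
  assumes k3: "k \<ge> 3"
    and LRC: "\<And>S. finite S \<Longrightarrow> card S = k - 1 \<Longrightarrow> S \<subseteq> {x. x > 0} \<Longrightarrow> LR_property S"
    and ppos: "p > 0"
    and pprop: "\<And>v :: nat \<Rightarrow> int.
        (\<forall>i\<in>{1..k}. v i \<in> {0..(int k + 1) * p - 1}) \<Longrightarrow>
        (\<forall>j\<in>{1..k}. Gcd (insert ((int k + 1) * p) (v ` ({1..k} - {j}))) = 1) \<Longrightarrow>
        (\<forall>i\<in>{1..k}. \<not> p dvd v i) \<Longrightarrow>
        \<exists>t\<in>{0..(int k + 1) * p - 1}. \<forall>i\<in>{1..k}.
           dist_int (of_int (t * v i) / of_int ((int k + 1) * p)) \<ge> 1 / (real k + 1)"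
  shows "finite V \<Longrightarrow> card V = k \<Longrightarrow> V \<subseteq> {x. x > 0} \<Longrightarrow> \<not> LR_property V \<Longrightarrow> p dvd (\<Prod>V)"
proof (induction "nat (\<Prod>V)" arbitrary: V rule: less_induct)
  case less
  note fin = less.prems(1) and cV = less.prems(2) and pos = less.prems(3) and nLR = less.prems(4)
  show ?case
  proof (cases "\<exists>j\<in>V. \<exists>q::int. q \<ge> 2 \<and> (\<forall>v\<in>V-{j}. q dvd v)")
    case True
    then obtain j q0 where jV: "j \<in> V" and q02: "q0 \<ge> 2" and qd0: "\<forall>v\<in>V-{j}. q0 dvd v" by blast
    show ?thesis
    proof (cases "coprime q0 j")
      case True
      from keyA[OF k3 LRC fin cV pos jV q02 qd0 True] nLR show ?thesis by blast
    next
      case False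
      define q where "q = gcd q0 j"
      have "q \<noteq> 1" using False unfolding q_def by (simp add: coprime_iff_gcd_eq_1)
      moreover have "q \<noteq> 0" using q02 unfolding q_def by simp
      moreover have "q \<ge> 0" unfolding q_def by simp
      ultimately have q2: "q \<ge> 2" by linarith
      have qa: "\<forall>v\<in>V. q dvd v"
      proof
        fix v assume "v \<in> V"
        thus "q dvd v" using qd0 unfolding q_def by (cases "v = j") (auto intro: dvd_trans)
      qed
      define V' where "V' = (\<lambda>v. v div q) ` V"
      have inj: "inj_on (\<lambda>v. v div q) V"
      proof (rule inj_onI)
        fix a b assume a: "a \<in> V" and b: "b \<in> V" and e: "a div q = b div q"
        have "a = q * (a div q)" using qa a by simp
        also have "\<dots> = q * (b div q)" using e by simp
        also have "\<dots> = b" using qa b by simp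
        finally show "a = b" .
      qed
      have cV': "card V' = k" unfolding V'_def using card_image[OF inj] cV by simp
      have finV': "finite V'" unfolding V'_def using fin by simp
      have posV': "V' \<subseteq> {x. x > 0}"
      proof
        fix s assume "s \<in> V'"
        then obtain v where v: "v \<in> V" "s = v div q" unfolding V'_def by auto
        have "v = q * s" using qa v by simp
        moreover have "v > 0" using v pos by auto
        ultimately show "s \<in> {x. x > 0}" using q2 by (simp add: zero_less_mult_iff)
      qed
      have nLR': "\<not> LR_property V'"
      proof
        assume "LR_property V'"
        then obtain t where t: "\<forall>s\<in>V'. 1 / (real (card V') + 1) \<le> dist_int (t * of_int s)"
          unfolding LR_property_def by blast
        have "\<forall>v\<in>V. 1 / (real (card V) + 1) \<le> dist_int (t / of_int q * of_int v)"
        proof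
          fix v assume vV: "v \<in> V"
          have "real_of_int v = of_int q * of_int (v div q)" using qa vV by (metis dvd_mult_div_cancel of_int_mult)
          hence "t / of_int q * of_int v = t * of_int (v div q)" using q2 by simp
          moreover have "v div q \<in> V'" unfolding V'_def using vV by auto
          ultimately show "1 / (real (card V) + 1) \<le> dist_int (t / of_int q * of_int v)"
            using t cV cV' by auto
        qed
        thus False using nLR unfolding LR_property_def by blast
      qed
      have prodV': "\<Prod>V' = (\<Prod>v\<in>V. v div q)" unfolding V'_def using prod.reindex[OF inj] by simp
      have prodV: "\<Prod>V = q ^ k * \<Prod>V'"
      proof -
        have "\<Prod>V = (\<Prod>v\<in>V. q * (v div q))" using qa by (intro prod.cong) auto
        also have "\<dots> = q ^ card V * (\<Prod>v\<in>V. v div q)" by (simp add: prod.distrib)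
        finally show ?thesis using prodV' cV by simp
      qed
      have P'pos: "\<Prod>V' > 0" using posV' by (intro prod_pos) auto
      have "q ^ k > 1" using q2 k3 by (metis le_less_trans less_imp_le_nat not_one_le_zero one_less_numeral_iff one_less_power order_less_le_trans semiring_norm(76) zero_less_numeral gr_zeroI le_numeral_extra(4) numeral_le_iff order.strict_implies_not_eq less_le_trans le_zero_eq zero_neq_numeral)
      hence "\<Prod>V' < \<Prod>V" using prodV P'pos by simp
      hence "nat (\<Prod>V') < nat (\<Prod>V)" using P'pos by simp
      from less.hyps[OF this finV' cV' posV' nLR'] have "p dvd \<Prod>V'" .
      thus ?thesis using prodV by simp
    qed
  next
    case False
    note noq = False
    show ?thesis
    proof (rule ccontr)
      assume npd: "\<not> p dvd \<Prod>V"
      have npv: "\<forall>v\<in>V. \<not> p dvd v" using npd fin by (meson dvd_prodI dvd_trans)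
      define n where "n = (int k + 1) * p"
      have npos: "n > 0" unfolding n_def using ppos by simp
      have pn: "p dvd n" unfolding n_def by simp
      obtain h where h: "bij_betw h {1..card V} V" using ex_bij_betw_nat_finite_1[OF fin] by blast
      hence h': "bij_betw h {1..k} V" using cV by simp
      have hV: "\<And>i. i \<in> {1..k} \<Longrightarrow> h i \<in> V" using h' bij_betwE by blast
      define w where "w = (\<lambda>i. h i mod n)"
      have hw: "\<And>i. h i = n * (h i div n) + w i" unfolding w_def by simp
      have c1: "\<forall>i\<in>{1..k}. w i \<in> {0..(int k + 1) * p - 1}"
        unfolding w_def using npos by (auto simp: n_def[symmetric] pos_mod_sign)
      have c3: "\<forall>i\<in>{1..k}. \<not> p dvd w i"
      proof (intro ballI notI)
        fix i assume i: "i \<in> {1..k}" and pw: "p dvd w i"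
        have "p dvd h i" using pw pn hw[of i] by (metis dvd_add dvd_mult2)
        thus False using npv hV[OF i] by blast
      qed
      have c2: "\<forall>j\<in>{1..k}. Gcd (insert ((int k + 1) * p) (w ` ({1..k} - {j}))) = 1"
      proof (rule ballI, rule ccontr)
        fix j assume j: "j \<in> {1..k}"
        define G where "G = Gcd (insert n (w ` ({1..k} - {j})))"
        assume "Gcd (insert ((int k + 1) * p) (w ` ({1..k} - {j}))) \<noteq> 1"
        hence G1: "G \<noteq> 1" unfolding G_def n_def .
        have Gn: "G dvd n" unfolding G_def by (simp add: Gcd_dvd)
        hence G0: "G \<noteq> 0" using npos by auto
        have "G \<ge> 0" unfolding G_def by simp
        hence G2: "G \<ge> 2" using G1 G0 by linarith
        have "\<forall>v\<in>V-{h j}. G dvd v"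
        proof
          fix v assume v: "v \<in> V - {h j}"
          then obtain i where i: "i \<in> {1..k}" "v = h i" using h' by (metis DiffD1 bij_betw_imp_surj_on imageE)
          have ij: "i \<noteq> j" using v i by auto
          have "G dvd w i" unfolding G_def using i ij by (intro Gcd_dvd) auto
          moreover have "G dvd n" using Gn .
          ultimately show "G dvd v" using hw[of i] i by (metis dvd_add dvd_mult2)
        qed
        thus False using noq hV[OF j] G2 by blast
      qed
      obtain t where t: "\<forall>i\<in>{1..k}. dist_int (of_int (t * w i) / of_int ((int k + 1) * p)) \<ge> 1 / (real k + 1)"
        using pprop[OF c1 c2 c3] by blast
      have "\<forall>v\<in>V. 1 / (real (card V) + 1) \<le> dist_int (real_of_int t / of_int n * of_int v)"
      proof
        fix v assume v: "v \<in> V"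
        then obtain i where i: "i \<in> {1..k}" "v = h i" using h' by (metis bij_betw_imp_surj_on imageE)
        have "real_of_int v = of_int n * of_int (h i div n) + of_int (w i)" using hw[of i] i
          by (metis of_int_add of_int_mult)
        hence "real_of_int t / of_int n * of_int v = of_int (t * w i) / of_int n + of_int (t * (h i div n))"
          using npos by (simp add: field_simps)
        moreover have "1 / (real k + 1) \<le> dist_int (of_int (t * w i) / of_int n)" using t i n_def by auto
        ultimately show "1 / (real (card V) + 1) \<le> dist_int (real_of_int t / of_int n * of_int v)"
          using dist_add_int cV by metis
      qed
      thus False using nLR unfolding LR_property_def by blast
    qed
  qed
qed


lemma prod_abs_int: "finite (X::int set) \<Longrightarrow> (\<Prod>x\<in>X. \<bar>x\<bar>) = \<bar>\<Prod>X\<bar>"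
  by (induction X rule: finite_induct) (auto simp: abs_mult)

theorem lemma5:
  fixes k :: nat and p :: int
  assumes k3: "k \<ge> 3"
    and LRC: "\<And>S. finite S \<Longrightarrow> card S = k - 1 \<Longrightarrow> S \<subseteq> {x. x > 0} \<Longrightarrow> LR_property S"
    and ppos: "p > 0"
    and pprop: "\<And>v :: nat \<Rightarrow> int.
        (\<forall>i\<in>{1..k}. v i \<in> {0..(int k + 1) * p - 1}) \<Longrightarrow>
        (\<forall>j\<in>{1..k}. Gcd (insert ((int k + 1) * p) (v ` ({1..k} - {j}))) = 1) \<Longrightarrow>
        (\<forall>i\<in>{1..k}. \<not> p dvd v i) \<Longrightarrow>
        \<exists>t\<in>{0..(int k + 1) * p - 1}. \<forall>i\<in>{1..k}.
           dist_int (of_int (t * v i) / of_int ((int k + 1) * p)) \<ge> 1 / (real k + 1)"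
  shows "\<And>V :: int set. finite V \<Longrightarrow> card V = k \<Longrightarrow> \<not> LR_property V \<Longrightarrow> p dvd (\<Prod>V)"
proof -
  fix V :: "int set"
  assume fin: "finite V" and cV: "card V = k" and nLR: "\<not> LR_property V"
  show "p dvd (\<Prod>V)"
  proof (rule ccontr)
    assume npd: "\<not> p dvd \<Prod>V"
    have z: "0 \<notin> V" using npd fin by (metis dvd_0_right prod_zero_iff)
    define A where "A = abs ` V"
    have finA: "finite A" unfolding A_def using fin by simp
    have Apos: "A \<subseteq> {x. x > 0}" unfolding A_def using z by auto
    have transfer: "c \<le> dist_int (t * of_int v)" if "v \<in> V" "\<forall>a\<in>A. c \<le> dist_int (t * of_int a)" for t c v
    proof -
      have "c \<le> dist_int (t * of_int \<bar>v\<bar>)" using that unfolding A_def by auto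
      thus ?thesis
      proof (cases "v \<ge> 0")
        case True thus ?thesis using \<open>c \<le> dist_int (t * of_int \<bar>v\<bar>)\<close> by simp
      next
        case False
        hence "t * of_int v = - (t * of_int \<bar>v\<bar>)" by simp
        thus ?thesis using dist_neg \<open>c \<le> dist_int (t * of_int \<bar>v\<bar>)\<close> by metis
      qed
    qed
    show False
    proof (cases "inj_on abs V")
      case True
      have cA: "card A = k" unfolding A_def using card_image[OF True] cV by simp
      have nLRA: "\<not> LR_property A"
      proof
        assume "LR_property A"
        then obtain t where t: "\<forall>a\<in>A. 1 / (real (card A) + 1) \<le> dist_int (t * of_int a)"
          unfolding LR_property_def by blast
        hence "\<forall>v\<in>V. 1 / (real (card V) + 1) \<le> dist_int (t * of_int v)"
          using transfer cA cV by simp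
        thus False using nLR unfolding LR_property_def by blast
      qed
      have "p dvd \<Prod>A" using main_pos[OF k3 LRC ppos pprop finA cA Apos nLRA] by blast
      moreover have "\<Prod>A = \<bar>\<Prod>V\<bar>" unfolding A_def using prod.reindex[OF True, of id] prod_abs_int[OF fin] by simp
      ultimately show False using npd by simp
    next
      case False
      have "card A \<noteq> card V" using False fin inj_on_iff_eq_card unfolding A_def by blast
      moreover have "card A \<le> card V" unfolding A_def using fin card_image_le by blast
      ultimately have cAk: "card A \<le> k - 1" using cV by simp
      have inf: "infinite ({x::int. x > 0} - A)"
      proof
        assume "finite ({x::int. x > 0} - A)"
        hence "finite ({x::int. x > 0})" using finA by (metis Diff_infinite_finite)
        moreover have "infinite {x::int. x > 0}"
        proof -
          have "{x::int. x > 0} = {0<..}" by auto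
          thus ?thesis by (simp add: infinite_Ioi)
        qed
        ultimately show False by simp
      qed
      obtain B where B: "B \<subseteq> {x::int. x > 0} - A" "finite B" "card B = k - 1 - card A"
        using infinite_arbitrarily_large[OF inf] by blast
      define S where "S = A \<union> B"
      have cS: "card S = k - 1" proof -
        have "A \<inter> B = {}" using B(1) by blast
        hence "card S = card A + card B" unfolding S_def using B(2) finA card_Un_disjoint by blast
        thus ?thesis using B(3) cAk by simp
      qed
      have finS: "finite S" unfolding S_def using B finA by simp
      have Spos: "S \<subseteq> {x. x > 0}" unfolding S_def using B Apos by auto
      from LRC[OF finS cS Spos] obtain t where t: "\<forall>s\<in>S. 1 / (real (card S) + 1) \<le> dist_int (t * of_int s)"
        unfolding LR_property_def by blast
      have kk: "real (card S) + 1 = real k" using cS k3 by simp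
      have "\<forall>a\<in>A. 1 / real k \<le> dist_int (t * of_int a)" using t kk unfolding S_def by auto
      hence "\<forall>v\<in>V. 1 / real k \<le> dist_int (t * of_int v)" using transfer by blast
      moreover have "1 / (real (card V) + 1) \<le> 1 / real k" using cV k3 by (simp add: field_simps)
      ultimately have "\<forall>v\<in>V. 1 / (real (card V) + 1) \<le> dist_int (t * of_int v)" by force
      thus False using nLR unfolding LR_property_def by blast
    qed
  qed
qed

end
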